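(* Let $M$ be a matroid on a finite set $E$ with $r(M)>0$. Then $M$ is a unique expansion matroid if and only if $M$ is a unique partition matroid, i.e. there exists a partition $P$ of the set $\cup P\subseteq E$ such that $\mathcal{I}(M)=\{X\subseteq \cup P: |X\cap D|\le 1\text{ for all } D\in P\}$.
   Context: For a matroid $M=(E,\mathcal{I})$: $\mathcal{I}(M)$ is its family of independent sets, $\mathcal{B}(M)$ its bases, $r(M)$ the size of a base. For $r(M)>0$, $s(M)=\{A\in\mathcal{I}(M): |A|=r(M)-1\}$. $M$ is a unique expansion matroid if for every $B\in\mathcal{B}(M)$ and every $A\in s(M)$, whenever $e_1,e_2\in B$ satisfy $A\cup\{e_1\}\in\mathcal{B}(M)$ and $A\cup\{e_2\}\in\mathcal{B}(M)$, then $e_1=e_2$. For a set family $S$, $\cup S=\bigcup_{X\in S}X$; a partition of a set $U$ is a family of nonempty pairwise disjoint subsets of $U$ with union $U$. *)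

theory Defs
  imports Main
begin

definition matroid :: "'a set \<Rightarrow> 'a set set \<Rightarrow> bool" where
  "matroid E Ind \<longleftrightarrow> finite E \<and> (\<forall>X\<in>Ind. X \<subseteq> E) \<and> {} \<in> Ind
     \<and> (\<forall>X Y. X \<in> Ind \<and> Y \<subseteq> X \<longrightarrow> Y \<in> Ind)
     \<and> (\<forall>X Y. X \<in> Ind \<and> Y \<in> Ind \<and> card X < card Y \<longrightarrow> (\<exists>e\<in>Y - X. insert e X \<in> Ind))"

definition bases :: "'a set set \<Rightarrow> 'a set set" where
  "bases Ind = {B \<in> Ind. \<forall>X\<in>Ind. B \<subseteq> X \<longrightarrow> X = B}"

text \<open>Rank of the matroid: the size of a base (all bases have equal size in a matroid).\<close>
definition mrank :: "'a set set \<Rightarrow> nat" where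
  "mrank Ind = card (SOME B. B \<in> bases Ind)"

definition sfam :: "'a set set \<Rightarrow> 'a set set" where
  "sfam Ind = {A \<in> Ind. card A = mrank Ind - 1}"

definition unique_expansion :: "'a set set \<Rightarrow> bool" where
  "unique_expansion Ind \<longleftrightarrow>
     (\<forall>B\<in>bases Ind. \<forall>A\<in>sfam Ind. \<forall>e1\<in>B. \<forall>e2\<in>B.
        insert e1 A \<in> bases Ind \<and> insert e2 A \<in> bases Ind \<longrightarrow> e1 = e2)"

definition is_partition :: "'a set set \<Rightarrow> 'a set \<Rightarrow> bool" where
  "is_partition P U \<longleftrightarrow> (\<forall>D\<in>P. D \<noteq> {}) \<and>
     (\<forall>D1\<in>P. \<forall>D2\<in>P. D1 \<noteq> D2 \<longrightarrow> D1 \<inter> D2 = {}) \<and> \<Union>P = U"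

definition unique_partition :: "'a set \<Rightarrow> 'a set set \<Rightarrow> bool" where
  "unique_partition E Ind \<longleftrightarrow>
     (\<exists>P. is_partition P (\<Union>P) \<and> \<Union>P \<subseteq> E \<and>
        Ind = {X. X \<subseteq> \<Union>P \<and> (\<forall>D\<in>P. card (X \<inter> D) \<le> 1)})"

end

theory Submission
  imports Defs
begin

lemma m_sub: "matroid E Ind \<Longrightarrow> X \<in> Ind \<Longrightarrow> X \<subseteq> E"
  unfolding matroid_def by blast

lemma m_fin: "matroid E Ind \<Longrightarrow> X \<in> Ind \<Longrightarrow> finite X"
  unfolding matroid_def by (meson finite_subset)

lemma m_down: "matroid E Ind \<Longrightarrow> X \<in> Ind \<Longrightarrow> Y \<subseteq> X \<Longrightarrow> Y \<in> Ind"
  unfolding matroid_def by blast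

lemma m_empty: "matroid E Ind \<Longrightarrow> {} \<in> Ind"
  unfolding matroid_def by blast

lemma m_aug: "matroid E Ind \<Longrightarrow> X \<in> Ind \<Longrightarrow> Y \<in> Ind \<Longrightarrow> card X < card Y \<Longrightarrow> \<exists>e\<in>Y - X. insert e X \<in> Ind"
  unfolding matroid_def by blast

lemma m_ext:
  assumes m: "matroid E Ind"
  shows "Y \<in> Ind \<Longrightarrow> Z \<in> Ind \<Longrightarrow> card Y \<le> card Z \<Longrightarrow> card Z - card Y = n
     \<Longrightarrow> \<exists>W. W \<in> Ind \<and> Y \<subseteq> W \<and> W \<subseteq> Y \<union> Z \<and> card W = card Z"
proof (induction n arbitrary: Y)
  case 0
  then show ?case by auto
next
  case (Suc n)
  then have "card Y < card Z" by simp
  then obtain e where e: "e \<in> Z - Y" "insert e Y \<in> Ind" using m_aug[OF m Suc.prems(1,2)] by blast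
  have fY: "finite Y" using m_fin[OF m Suc.prems(1)] .
  have c: "card (insert e Y) = Suc (card Y)" using e fY by simp
  from Suc.IH[OF e(2) Suc.prems(2)] c Suc.prems obtain W where
    "W \<in> Ind" "insert e Y \<subseteq> W" "W \<subseteq> insert e Y \<union> Z" "card W = card Z" by fastforce
  then show ?case using e by blast
qed

lemma m_ext':
  assumes m: "matroid E Ind" "Y \<in> Ind" "Z \<in> Ind" "card Y \<le> card Z"
  shows "\<exists>W. W \<in> Ind \<and> Y \<subseteq> W \<and> W \<subseteq> Y \<union> Z \<and> card W = card Z"
  using m_ext[OF m(1) m(2,3,4) refl] .

lemma base_max:
  assumes m: "matroid E Ind" and B: "B \<in> bases Ind" and X: "X \<in> Ind"
  shows "card X \<le> card B"
proof (rule ccontr)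
  assume "\<not> card X \<le> card B"
  then have "card B < card X" by simp
  moreover have "B \<in> Ind" using B unfolding bases_def by blast
  ultimately obtain e where e: "e \<in> X - B" "insert e B \<in> Ind" using m_aug[OF m _ X] by blast
  then have "insert e B = B" using B unfolding bases_def by blast
  then show False using e by blast
qed

lemma base_ex:
  assumes m: "matroid E Ind"
  shows "\<exists>B. B \<in> bases Ind"
proof -
  have fI: "finite Ind" using m unfolding matroid_def
    by (meson Pow_iff finite_Pow_iff finite_subset subsetI)
  have ne: "card ` Ind \<noteq> {}" using m_empty[OF m] by blast
  obtain B where B: "B \<in> Ind" "card B = Max (card ` Ind)"
    using Max_in[OF finite_imageI[OF fI] ne] by auto
  have "\<forall>X\<in>Ind. B \<subseteq> X \<longrightarrow> X = B"
  proof (intro ballI impI)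
    fix X assume X: "X \<in> Ind" "B \<subseteq> X"
    have "card X \<le> card B" using B fI X by simp
    then show "X = B" using card_subset_eq[OF m_fin[OF m X(1)] X(2)] X(2)
      by (metis card_mono m m_fin X(1) le_antisym)
  qed
  then show ?thesis using B unfolding bases_def by blast
qed

lemma base_card:
  assumes m: "matroid E Ind" and B: "B \<in> bases Ind"
  shows "card B = mrank Ind"
proof -
  have B': "(SOME B. B \<in> bases Ind) \<in> bases Ind" using base_ex[OF m] by (metis someI)
  have "B \<in> Ind" "(SOME B. B \<in> bases Ind) \<in> Ind" using B B' unfolding bases_def by auto
  then show ?thesis unfolding mrank_def
    using base_max[OF m B] base_max[OF m B'] by (simp add: le_antisym)
qed

lemma ind_card: "matroid E Ind \<Longrightarrow> X \<in> Ind \<Longrightarrow> card X \<le> mrank Ind"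
  by (metis base_card base_ex base_max)

lemma bases_iff:
  assumes m: "matroid E Ind"
  shows "B \<in> bases Ind \<longleftrightarrow> B \<in> Ind \<and> card B = mrank Ind"
proof
  assume "B \<in> bases Ind" then show "B \<in> Ind \<and> card B = mrank Ind"
    using base_card[OF m] unfolding bases_def by blast
next
  assume B: "B \<in> Ind \<and> card B = mrank Ind"
  have "\<forall>X\<in>Ind. B \<subseteq> X \<longrightarrow> X = B"
  proof (intro ballI impI)
    fix X assume X: "X \<in> Ind" "B \<subseteq> X"
    have "card X \<le> card B" using ind_card[OF m X(1)] B by simp
    then show "X = B" by (metis X card_seteq m m_fin)
  qed
  then show "B \<in> bases Ind" using B unfolding bases_def by blast
qed


lemma key:
  assumes m: "matroid E Ind" and ue: "unique_expansion Ind"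
    and C: "C \<notin> Ind" "C \<subseteq> E" "\<forall>c\<in>C. C - {c} \<in> Ind"
    and a: "a \<in> C" and b: "b \<in> C" and c: "c \<in> C" and d: "a \<noteq> b" "a \<noteq> c" "b \<noteq> c"
  shows False
proof -
  obtain B0 where B0: "B0 \<in> bases Ind" using base_ex[OF m] by blast
  have Ca: "C - {a} \<in> Ind" using C a by blast
  obtain B where B: "B \<in> Ind" "C - {a} \<subseteq> B" "card B = mrank Ind"
    using m_ext'[OF m Ca, of B0] B0 bases_iff[OF m] ind_card[OF m Ca] by auto
  have Bb: "B \<in> bases Ind" using B bases_iff[OF m] by blast
  have fB: "finite B" using m_fin[OF m B(1)] .
  have aB: "a \<notin> B"
  proof
    assume "a \<in> B" then have "C \<subseteq> B" using B(2) by blast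
    then show False using m_down[OF m B(1)] C(1) by blast
  qed
  have W: "insert a (B - {x}) \<in> bases Ind" if x: "x \<in> C" "x \<noteq> a" for x
  proof -
    have Cx: "C - {x} \<in> Ind" using C x by blast
    obtain W where W: "W \<in> Ind" "C - {x} \<subseteq> W" "W \<subseteq> (C - {x}) \<union> B" "card W = card B"
      using m_ext'[OF m Cx B(1)] ind_card[OF m Cx] B(3) by auto
    have xW: "x \<notin> W"
    proof
      assume "x \<in> W" then have "C \<subseteq> W" using W(2) by blast
      then show False using m_down[OF m W(1)] C(1) by blast
    qed
    have xB: "x \<in> B" using x B(2) by blast
    have sub: "W \<subseteq> insert a (B - {x})" using W(3) xW B(2) by blast
    have cc: "card (insert a (B - {x})) = card B" using aB xB fB
      by (simp add: card_Diff_singleton) (metis Suc_pred card_gt_0_iff empty_iff)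
    have "W = insert a (B - {x})"
      using card_subset_eq[OF _ sub] fB cc W(4) by simp
    then show ?thesis using W(1) W(4) B(3) bases_iff[OF m] by simp
  qed
  have Wb: "insert a (B - {b}) \<in> bases Ind" using W[OF b] d by blast
  have Wc: "insert a (B - {c}) \<in> bases Ind" using W[OF c] d by blast
  define A where "A = insert a (B - {b, c})"
  have bB: "b \<in> B" and cB: "c \<in> B" using B(2) b c d by auto
  have AI: "A \<in> Ind" using m_down[OF m _ , of "insert a (B - {b})" A] Wb
    unfolding A_def bases_def by blast
  have "card (B - {b, c}) = card B - 2" using bB cB d fB by (simp add: card_Diff_subset)
  moreover have "card B \<ge> 2" using bB cB d fB
    by (metis card_2_iff card_mono empty_subsetI insert_subset)
  ultimately have "card A = mrank Ind - 1" unfolding A_def using aB fB B(3) by simp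
  then have As: "A \<in> sfam Ind" using AI unfolding sfam_def by blast
  have "insert b A = insert a (B - {c})" unfolding A_def using bB d by blast
  moreover have "insert c A = insert a (B - {b})" unfolding A_def using cB d by blast
  ultimately show False using ue Bb As bB cB Wb Wc d(3) unfolding unique_expansion_def by metis
qed


lemma trans2:
  assumes m: "matroid E Ind" and N: "{f} \<in> Ind" "{g} \<in> Ind" "{h} \<in> Ind"
    and fg: "f = g \<or> {f, g} \<notin> Ind" and gh: "g = h \<or> {g, h} \<notin> Ind"
  shows "f = h \<or> {f, h} \<notin> Ind"
proof (rule ccontr)
  assume H: "\<not> (f = h \<or> {f, h} \<notin> Ind)"
  then have fh: "f \<noteq> h" "{f,h} \<in> Ind" by auto
  have fg': "f \<noteq> g" using H gh by auto
  have gh': "g \<noteq> h" using H fg by auto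
  have "card {g} < card {f, h}" using fh by simp
  then obtain e where "e \<in> {f,h} - {g}" "insert e {g} \<in> Ind" using m_aug[OF m N(2) fh(2)] by blast
  then show False using fg gh fg' gh' by (auto simp: insert_commute)
qed

lemma part_ind:
  assumes m: "matroid E Ind" and ue: "unique_expansion Ind"
    and X: "X \<subseteq> E" "\<forall>x\<in>X. {x} \<in> Ind" "\<forall>f\<in>X. \<forall>g\<in>X. f \<noteq> g \<longrightarrow> {f,g} \<in> Ind"
  shows "X \<in> Ind"
proof -
  have fE: "finite E" using m unfolding matroid_def by blast
  have "\<And>Y. Y \<subseteq> X \<Longrightarrow> Y \<in> Ind"
  proof -
    fix Y show "Y \<subseteq> X \<Longrightarrow> Y \<in> Ind"
    proof (induction "card Y" arbitrary: Y rule: less_induct)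
      case less
      have "Y \<subseteq> E" using less.prems X(1) by (rule subset_trans)
      then have fY: "finite Y" using fE by (rule finite_subset)
      show ?case
      proof (cases "card Y \<le> 2")
        case True
        then consider "card Y = 0" | "card Y = 1" | "card Y = 2" by linarith
        then show ?thesis
        proof cases
          case 1 then show ?thesis using fY m_empty[OF m] by simp
        next
          case 2
          then obtain x where x: "Y = {x}" by (rule card_1_singletonE)
          then have "x \<in> X" using less.prems by simp
          then show ?thesis using x X(2) by simp
        next
          case 3
          then obtain x y where xy: "Y = {x,y}" "x \<noteq> y" unfolding card_2_iff by blast
          then have "x \<in> X" "y \<in> X" using less.prems by simp_all
          then show ?thesis using xy X(3) by simp
        qed
      next
        case False
        show ?thesis
        proof (rule ccontr)
          assume nY: "Y \<notin> Ind"
          have sub: "\<forall>c\<in>Y. Y - {c} \<in> Ind"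
          proof
            fix c assume "c \<in> Y"
            then have "card (Y - {c}) < card Y" using fY using card_Diff1_less[OF fY] by blast
            moreover have "Y - {c} \<subseteq> X" using less.prems by blast
            ultimately show "Y - {c} \<in> Ind" by (rule less.hyps)
          qed
          have "Y \<noteq> {}" using False by (intro notI) simp
          then obtain a where a: "a \<in> Y" by blast
          have "card (Y - {a}) \<ge> 2" using False a fY by simp
          then have "Y - {a} \<noteq> {}" by (intro notI) simp
          then obtain b where b: "b \<in> Y - {a}" by blast
          have "card (Y - {a} - {b}) \<ge> 1" using False a b fY by simp
          then have "Y - {a} - {b} \<noteq> {}" by (intro notI) simp
          then obtain c where c: "c \<in> Y - {a} - {b}" by blast
          have YE: "Y \<subseteq> E" using less.prems X(1) by (rule subset_trans)
          have d: "a \<noteq> b" "a \<noteq> c" "b \<noteq> c" using b c by auto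
          have bY: "b \<in> Y" and cY: "c \<in> Y" using b c by auto
          show False by (rule key[OF m ue nY YE sub a bY cY d])
        qed
      qed
    qed
  qed
  then show ?thesis by blast
qed

theorem theorem7:
  fixes E :: "'a set" and Ind :: "'a set set"
  assumes "matroid E Ind" and "mrank Ind > 0"
  shows "unique_expansion Ind \<longleftrightarrow> unique_partition E Ind"
proof
  note m = assms(1)
  have fE: "finite E" using m unfolding matroid_def by blast
  assume ue: "unique_expansion Ind"
  define N where "N = {e\<in>E. {e} \<in> Ind}"
  define cls where "cls e = {f\<in>N. f = e \<or> {e,f} \<notin> Ind}" for e
  define P where "P = cls ` N"
  have NE: "N \<subseteq> E" unfolding N_def by (rule Collect_restrict)
  have tr: "f = h \<or> {f, h} \<notin> Ind" if "f \<in> N" "g \<in> N" "h \<in> N"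
     "f = g \<or> {f, g} \<notin> Ind" "g = h \<or> {g, h} \<notin> Ind" for f g h
    using trans2[OF m, of f g h] that unfolding N_def by blast
  have sy: "{f,g} = {g,f}" for f g :: 'a by blast
  have UP: "\<Union>P = N" unfolding P_def cls_def by blast
  have same: "f = g \<or> {f,g} \<notin> Ind" if "f \<in> cls e" "g \<in> cls e" "e \<in> N" for e f g
  proof -
    have "f \<in> N" "g \<in> N" "f = e \<or> {f,e} \<notin> Ind" "e = g \<or> {e,g} \<notin> Ind"
      using that unfolding cls_def by (auto simp: insert_commute)
    then show ?thesis using tr[of f e g] that(3) by blast
  qed
  have part: "is_partition P (\<Union>P)"
    unfolding is_partition_def
  proof (intro conjI ballI impI)
    fix D assume "D \<in> P" then show "D \<noteq> {}" unfolding P_def cls_def by blast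
  next
    fix D1 D2 assume D: "D1 \<in> P" "D2 \<in> P" "D1 \<noteq> D2"
    then obtain e1 e2 where e: "e1 \<in> N" "e2 \<in> N" "D1 = cls e1" "D2 = cls e2" unfolding P_def by blast
    show "D1 \<inter> D2 = {}"
    proof (rule ccontr)
      assume "D1 \<inter> D2 \<noteq> {}"
      then obtain g where g: "g \<in> cls e1" "g \<in> cls e2" using e by blast
      have gN: "g \<in> N" using g unfolding cls_def by blast
      have "e1 = e2 \<or> {e1,e2} \<notin> Ind"
        using tr[OF e(1) gN e(2)] g unfolding cls_def by (auto simp: insert_commute)
      then have E12: "e1 = e2 \<or> {e1,e2} \<notin> Ind" "e2 = e1 \<or> {e2,e1} \<notin> Ind" by (auto simp: insert_commute)
      have "cls e1 \<subseteq> cls e2"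
      proof
        fix x assume "x \<in> cls e1"
        then have x0: "x \<in> N" "x = e1 \<or> {e1,x} \<notin> Ind" unfolding cls_def by simp_all
        then have x: "x \<in> N" "e1 = x \<or> {e1,x} \<notin> Ind" by blast+
        have "e2 = x \<or> {e2,x} \<notin> Ind" using tr[OF e(2) e(1) x(1) E12(2) x(2)] .
        then have "x = e2 \<or> {e2,x} \<notin> Ind" by blast
        then show "x \<in> cls e2" using x(1) unfolding cls_def by simp
      qed
      moreover have "cls e2 \<subseteq> cls e1"
      proof
        fix x assume "x \<in> cls e2"
        then have x0: "x \<in> N" "x = e2 \<or> {e2,x} \<notin> Ind" unfolding cls_def by simp_all
        then have x: "x \<in> N" "e2 = x \<or> {e2,x} \<notin> Ind" by blast+
        have "e1 = x \<or> {e1,x} \<notin> Ind" using tr[OF e(1) e(2) x(1) E12(1) x(2)] .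
        then have "x = e1 \<or> {e1,x} \<notin> Ind" by blast
        then show "x \<in> cls e1" using x(1) unfolding cls_def by simp
      qed
      ultimately have "cls e1 = cls e2" by blast
      then show False using D e by simp
    qed
  qed simp
  have IndEq: "Ind = {X. X \<subseteq> \<Union>P \<and> (\<forall>D\<in>P. card (X \<inter> D) \<le> 1)}"
  proof (intro set_eqI iffI)
    fix X assume X: "X \<in> Ind"
    have XN: "X \<subseteq> N" unfolding N_def using m_sub[OF m X] m_down[OF m X] by blast
    have fX: "finite X" using m_fin[OF m X] .
    have "card (X \<inter> D) \<le> 1" if D: "D \<in> P" for D
    proof -
      obtain e where e: "e \<in> N" "D = cls e" using D unfolding P_def by blast
      have "\<forall>f\<in>X \<inter> D. \<forall>g\<in>X \<inter> D. f = g"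
      proof (intro ballI)
        fix f g assume "f \<in> X \<inter> D" "g \<in> X \<inter> D"
        then show "f = g" using same[of f e g] e m_down[OF m X, of "{f,g}"] by blast
      qed
      then show ?thesis using card_le_Suc0_iff_eq[of "X \<inter> D"] fX by simp
    qed
    then show "X \<in> {X. X \<subseteq> \<Union>P \<and> (\<forall>D\<in>P. card (X \<inter> D) \<le> 1)}" using XN UP by blast
  next
    fix X assume "X \<in> {X. X \<subseteq> \<Union>P \<and> (\<forall>D\<in>P. card (X \<inter> D) \<le> 1)}"
    then have X: "X \<subseteq> N" "\<forall>D\<in>P. card (X \<inter> D) \<le> 1" using UP by auto
    have "X \<subseteq> E" using X(1) NE by (rule subset_trans)
    then have fX: "finite X" using fE by (rule finite_subset)
    have pw: "\<forall>f\<in>X. \<forall>g\<in>X. f \<noteq> g \<longrightarrow> {f,g} \<in> Ind"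
    proof (intro ballI impI)
      fix f g assume fg: "f \<in> X" "g \<in> X" "f \<noteq> g"
      show "{f,g} \<in> Ind"
      proof (rule ccontr)
        assume "{f,g} \<notin> Ind"
        then have "f \<in> cls f" "g \<in> cls f" using fg X(1) unfolding cls_def by auto
        moreover have "cls f \<in> P" using fg X(1) unfolding P_def by blast
        ultimately have "card (X \<inter> cls f) \<le> 1" "f \<in> X \<inter> cls f" "g \<in> X \<inter> cls f" using X fg by auto
        then show False using card_le_Suc0_iff_eq[of "X \<inter> cls f"] fX fg(3) by auto
      qed
    qed
    show "X \<in> Ind" using part_ind[OF m ue _ _ pw] X(1) unfolding N_def by blast
  qed
  have "\<Union>P \<subseteq> E" using UP NE by simp
  then show "unique_partition E Ind" unfolding unique_partition_def
    using part IndEq by (intro exI[of _ P]) simp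
next
  note m = assms(1)
  assume "unique_partition E Ind"
  then obtain P where part: "is_partition P (\<Union>P)"
    and IndEq: "Ind = {X. X \<subseteq> \<Union>P \<and> (\<forall>D\<in>P. card (X \<inter> D) \<le> 1)}"
    unfolding unique_partition_def by blast
  have indD1: "X \<subseteq> \<Union>P" if "X \<in> Ind" for X using that IndEq by simp
  have indD2: "card (X \<inter> D) \<le> 1" if "X \<in> Ind" "D \<in> P" for X D using that IndEq by simp
  have indI: "X \<in> Ind" if "X \<subseteq> \<Union>P" "\<forall>D\<in>P. card (X \<inter> D) \<le> 1" for X using that IndEq by simp
  have disj: "\<And>D1 D2. D1 \<in> P \<Longrightarrow> D2 \<in> P \<Longrightarrow> D1 \<noteq> D2 \<Longrightarrow> D1 \<inter> D2 = {}"
    using part unfolding is_partition_def by blast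
  show "unique_expansion Ind" unfolding unique_expansion_def
  proof (intro ballI impI)
    fix B A e1 e2 assume B: "B \<in> bases Ind" and A: "A \<in> sfam Ind" and e: "e1 \<in> B" "e2 \<in> B"
      and ins: "insert e1 A \<in> bases Ind \<and> insert e2 A \<in> bases Ind"
    have AI: "A \<in> Ind" "card A = mrank Ind - 1" using A unfolding sfam_def by auto
    have fA: "finite A" using m_fin[OF m AI(1)] .
    have I1: "insert e1 A \<in> Ind" "card (insert e1 A) = mrank Ind" and
         I2: "insert e2 A \<in> Ind" "card (insert e2 A) = mrank Ind"
      using ins bases_iff[OF m] by auto
    have e1A: "e1 \<notin> A"
    proof
      assume "e1 \<in> A" then have "insert e1 A = A" by blast
      then show False using I1(2) AI(2) assms(2) by simp
    qed
    have e2A: "e2 \<notin> A"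
    proof
      assume "e2 \<in> A" then have "insert e2 A = A" by blast
      then show False using I2(2) AI(2) assms(2) by simp
    qed
    obtain D1 where D1: "D1 \<in> P" "e1 \<in> D1" using indD1[OF I1(1)] by blast
    obtain D2 where D2: "D2 \<in> P" "e2 \<in> D2" using indD1[OF I2(1)] by blast
    have fin_int: "finite (X \<inter> D)" if "X \<in> Ind" for X D using m_fin[OF m that] by simp
    have AD1: "A \<inter> D1 = {}"
    proof -
      have "card (insert e1 A \<inter> D1) \<le> 1" using indD2[OF I1(1) D1(1)] .
      then show ?thesis using card_le_Suc0_iff_eq[OF fin_int[OF I1(1)], of D1] D1 e1A by auto
    qed
    have AD2: "A \<inter> D2 = {}"
    proof -
      have "card (insert e2 A \<inter> D2) \<le> 1" using indD2[OF I2(1) D2(1)] .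
      then show ?thesis using card_le_Suc0_iff_eq[OF fin_int[OF I2(1)], of D2] D2 e2A by auto
    qed
    have "D1 = D2"
    proof (rule ccontr)
      assume ne: "D1 \<noteq> D2"
      have dd: "D1 \<inter> D2 = {}" using disj[OF D1(1) D2(1) ne] .
      define X where "X = insert e2 (insert e1 A)"
      have e12: "e1 \<noteq> e2" using dd D1 D2 by blast
      have XI: "X \<in> Ind"
      proof -
        have "X \<subseteq> \<Union>P" unfolding X_def using indD1[OF I1(1)] indD1[OF I2(1)] by blast
        moreover have "card (X \<inter> D) \<le> 1" if D: "D \<in> P" for D
        proof (cases "D = D1")
          case True
          then have "X \<inter> D = {e1}" unfolding X_def using AD1 D1 D2 dd by blast
          then show ?thesis by simp
        next
          case F1: False
          show ?thesis
          proof (cases "D = D2")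
            case True
            then have "X \<inter> D = {e2}" unfolding X_def using AD2 D1 D2 dd by blast
            then show ?thesis by simp
          next
            case False
            have "e1 \<notin> D" using disj[OF D D1(1) F1] D1 by blast
            then have "X \<inter> D = insert e2 A \<inter> D" unfolding X_def using disj[OF D D2(1) False] D2 by blast
            then show ?thesis using indD2[OF I2(1) D] by simp
          qed
        qed
        ultimately show ?thesis using indI by blast
      qed
      have "card X = mrank Ind + 1" unfolding X_def using I1 e12 e2A fA by simp
      then show False using ind_card[OF m XI] by simp
    qed
    have BI: "B \<in> Ind" using B unfolding bases_def by blast
    have "card (B \<inter> D1) \<le> 1" using indD2[OF BI D1(1)] .
    then show "e1 = e2" using card_le_Suc0_iff_eq[OF fin_int[OF BI], of D1] e D1 D2 \<open>D1 = D2\<close> by auto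
  qed
qed

end
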